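(* Consider an affiliation random graph mixture model with $Q\ge 2$ groups (either the binary one or the weighted one), with all parameters other than $\boldsymbol\pi$ held fixed. If $n<Q$, then the group proportions are not identifiable up to label swapping from the joint distribution of $K_n$: there exist $\boldsymbol\pi,\boldsymbol\pi'$ in the open simplex, with $\boldsymbol\pi'$ not a permutation of $\boldsymbol\pi$, which induce the same joint law of $K_n$. Equivalently, identifiability of $\boldsymbol\pi$ up to label swapping from the law of $K_n$ requires $n\ge Q$.
   Context: Random graph mixture model: nodes have i.i.d. latent groups $Z_i\in\{1,\dots,Q\}$ with $\pi_q=\mathbb P(Z_i=q)\in(0,1)$, $\sum_q\pi_q=1$; edge variables $X_{ij}$ ($i<j$) are conditionally independent given all $Z$'s, with law of $X_{ij}$ depending only on $(Z_i,Z_j)$. Binary affiliation model: $X_{ij}\in\{0,1\}$, $\mathbb P(X_{ij}=1\mid Z_i=q,Z_j=l)=\alpha$ if $q=l$, $\beta$ if $q\ne l$. Weighted affiliation model: the conditional law of $X_{ij}$ given $Z_i=q,Z_j=l$ is $\mu_{\rm in}$ if $q=l$ and $\mu_{\rm out}$ if $q\ne l$, where $\mu_{\rm in},\mu_{\rm out}$ are probability measures on $\mathbb N$, $\mathbb R$ or $\mathbb R^s$ (e.g. $\mu=(1-p)\delta_0+pF$ with $F$ having no atom at $0$). $K_n$ denotes the collection of the $\binom n2$ edge variables among a set of $n$ nodes. *)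

theory Defs
  imports "HOL-Probability.Probability"
begin

definition edges :: "nat \<Rightarrow> (nat \<times> nat) set" where
  "edges n = {(i, j). i < j \<and> j < n}"

definition open_simplex :: "nat \<Rightarrow> nat pmf \<Rightarrow> bool" where
  "open_simplex Q p \<longleftrightarrow> set_pmf p \<subseteq> {..<Q} \<and> (\<forall>q<Q. pmf p q > 0)"

text \<open>Joint law of K_n in the (weighted) affiliation model: latent groups Z_i i.i.d. with law p,
  edges conditionally independent given Z, X_ij ~ mu_in if Z_i = Z_j and mu_out otherwise.\<close>
definition affiliation_law ::
  "nat \<Rightarrow> nat pmf \<Rightarrow> 'a measure \<Rightarrow> 'a measure \<Rightarrow> ((nat \<times> nat) \<Rightarrow> 'a) measure" where
  "affiliation_law n p mu_in mu_out =
     bind (measure_pmf (Pi_pmf {..<n} 0 (\<lambda>_. p)))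
       (\<lambda>z. PiM (edges n) (\<lambda>e. if z (fst e) = z (snd e) then mu_in else mu_out))"

definition label_swap :: "nat \<Rightarrow> nat pmf \<Rightarrow> nat pmf \<Rightarrow> bool" where
  "label_swap Q p p' \<longleftrightarrow> (\<exists>\<sigma>. \<sigma> permutes {..<Q} \<and> (\<forall>q. pmf p' q = pmf p (\<sigma> q)))"

end

theory Submission
  imports Defs
begin


definition gQ :: "nat \<Rightarrow> real \<Rightarrow> real" where "gQ Q x = (2 + cos x) / (2 * real Q)"

lemma root_sum:
  fixes k :: int
  assumes Q: "Q > 0" and k: "\<bar>k\<bar> < int Q"
  shows "(\<Sum>r<Q. exp (\<i> * (of_int k * complex_of_real ((\<psi> + 2*pi*real r)/real Q))))
         = (if k = 0 then of_nat Q else 0)"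
proof -
  define \<omega> where "\<omega> = exp (2 * pi * \<i> * of_int k / of_nat Q)"
  define A where "A = exp (\<i> * of_int k * complex_of_real \<psi> / of_nat Q)"
  have eq: "exp (\<i> * (of_int k * complex_of_real ((\<psi> + 2*pi*real r)/real Q))) = A * \<omega> ^ r" for r
  proof -
    have "\<i> * (of_int k * complex_of_real ((\<psi> + 2*pi*real r)/real Q))
          = \<i> * of_int k * complex_of_real \<psi> / of_nat Q + of_nat r * (2 * pi * \<i> * of_int k / of_nat Q)"
      using Q by (simp add: field_simps)
    then show ?thesis unfolding A_def \<omega>_def by (simp only: exp_add exp_of_nat_mult)
  qed
  show ?thesis
  proof (cases "k = 0")
    case True then show ?thesis by simp
  next
    case False
    have w1: "\<omega> \<noteq> 1"
    proof
      assume "\<omega> = 1"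
      then obtain m :: int where m: "Im (2 * pi * \<i> * of_int k / of_nat Q) = of_int (2 * m) * pi"
        unfolding \<omega>_def exp_eq_1 by blast
      have "2 * pi * real_of_int k / real Q = of_int (2 * m) * pi" using m by simp
      then have "real_of_int k = real_of_int m * real Q" using Q by (simp add: field_simps)
      then have "k = m * int Q" by (metis of_int_eq_iff of_int_mult of_int_of_nat_eq)
      with k False show False
        by (cases "m = 0") (auto simp: abs_mult dest!: mult_le_cancel_right1 [THEN iffD1, rotated] | smt (verit) abs_ge_self abs_mult_self_eq mult_le_cancel_right1 of_nat_0_le_iff zero_le_mult_iff)+
    qed
    have wQ: "\<omega> ^ Q = 1"
    proof -
      have "\<omega> ^ Q = exp (of_nat Q * (2 * pi * \<i> * of_int k / of_nat Q))"
        unfolding \<omega>_def by (simp only: flip: exp_of_nat_mult)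
      also have "of_nat Q * (2 * pi * \<i> * of_int k / of_nat Q) = complex_of_real (2 * pi * of_int k) * \<i>"
        using Q by simp
      also have "exp \<dots> = 1" by (simp add: exp_eq_1)
      finally show ?thesis .
    qed
    have "(\<Sum>r<Q. exp (\<i> * (of_int k * complex_of_real ((\<psi> + 2*pi*real r)/real Q)))) = A * (\<Sum>r<Q. \<omega> ^ r)"
      by (simp only: eq sum_distrib_left)
    also have "(\<Sum>r<Q. \<omega> ^ r) = 0" using geometric_sum[OF w1, of Q] wQ by simp
    finally show ?thesis using False by simp
  qed
qed

definition cf :: "nat \<Rightarrow> real \<Rightarrow> nat \<Rightarrow> complex" where
  "cf Q b t = (if t = 0 then exp (- (\<i> * complex_of_real b)) / (4 * of_nat Q)
               else if t = 1 then 1 / of_nat Q else exp (\<i> * complex_of_real b) / (4 * of_nat Q))"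

lemma g_expand:
  assumes Q: "Q > 0"
  shows "complex_of_real (gQ Q (\<psi> + b)) =
     (\<Sum>t<3. cf Q b t * exp (\<i> * (of_int (int t - 1) * complex_of_real \<psi>)))"
proof -
  have c: "complex_of_real (cos (\<psi> + b)) = (exp (\<i> * complex_of_real (\<psi> + b)) + exp (- (\<i> * complex_of_real (\<psi> + b)))) / 2"
    by (simp add: cos_of_real [symmetric] cos_exp_eq)
  have e1: "exp (\<i> * complex_of_real (\<psi> + b)) = exp (\<i> * complex_of_real b) * exp (\<i> * complex_of_real \<psi>)"
    by (simp add: distrib_left exp_add mult.commute)
  have e2: "exp (- (\<i> * complex_of_real (\<psi> + b))) = exp (- (\<i> * complex_of_real b)) * exp (- (\<i> * complex_of_real \<psi>))"
    by (subst exp_add[symmetric]) (simp add: algebra_simps)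
  have s3: "(\<Sum>t<3. f t) = f 0 + f 1 + f 2" for f :: "nat \<Rightarrow> complex"
    by (simp add: numeral_3_eq_3 numeral_2_eq_2)
  have x0: "exp (\<i> * (of_int (int 0 - 1) * complex_of_real \<psi>)) = exp (- (\<i> * complex_of_real \<psi>))" by simp
  have x1: "exp (\<i> * (of_int (int 1 - 1) * complex_of_real \<psi>)) = 1" by simp
  have x2: "exp (\<i> * (of_int (int 2 - 1) * complex_of_real \<psi>)) = exp (\<i> * complex_of_real \<psi>)" by simp
  have L: "complex_of_real (gQ Q (\<psi> + b)) = (2 + complex_of_real (cos (\<psi> + b))) / (2 * of_nat Q)"
    unfolding gQ_def by simp
  show ?thesis
    unfolding s3 x0 x1 x2 L c e1 e2 cf_def using Q
    by (simp add: field_simps)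
qed

lemma key_complex:
  fixes \<beta> :: "nat \<Rightarrow> real"
  assumes Q: "Q > 0" and n: "n < Q"
  shows "complex_of_real (\<Sum>r<Q. \<Prod>i<n. gQ Q ((\<theta> + 2*pi*real r)/real Q + \<beta> i))
     = (\<Sum>\<tau>\<in>PiE {..<n} (\<lambda>_. {..<3}). (\<Prod>i<n. cf Q (\<beta> i) (\<tau> i)) *
          (if (\<Sum>i<n. int (\<tau> i) - 1) = 0 then of_nat Q else 0))"
proof -
  let ?T = "PiE {..<n} (\<lambda>_. {..<3::nat})"
  let ?K = "\<lambda>\<tau>. (\<Sum>i<n. int (\<tau> i) - 1)"
  let ?E = "\<lambda>k r. exp (\<i> * (of_int k * complex_of_real ((\<theta> + 2*pi*real r)/real Q)))"
  have prodE: "(\<Prod>i<n. cf Q (\<beta> i) (\<tau> i) * ?E (int (\<tau> i) - 1) r) = (\<Prod>i<n. cf Q (\<beta> i) (\<tau> i)) * ?E (?K \<tau>) r"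
    for \<tau> r
  proof -
    have "?E (?K \<tau>) r = exp (\<Sum>i<n. \<i> * (of_int (int (\<tau> i) - 1) * complex_of_real ((\<theta> + 2*pi*real r)/real Q)))"
      by (simp only: of_int_sum sum_distrib_left sum_distrib_right)
    also have "\<dots> = (\<Prod>i<n. ?E (int (\<tau> i) - 1) r)" by (rule exp_sum) simp
    finally show ?thesis by (simp only: prod.distrib)
  qed
  have Kb: "\<bar>?K \<tau>\<bar> < int Q" if "\<tau> \<in> ?T" for \<tau>
  proof -
    have "\<bar>?K \<tau>\<bar> \<le> (\<Sum>i<n. \<bar>int (\<tau> i) - 1\<bar>)" by (rule sum_abs)
    also have "\<dots> \<le> (\<Sum>i<n. 1)"
      using that by (intro sum_mono) (drule (1) PiE_mem, auto)
    finally show ?thesis using n by simp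
  qed
  have "complex_of_real (\<Sum>r<Q. \<Prod>i<n. gQ Q ((\<theta> + 2*pi*real r)/real Q + \<beta> i))
      = (\<Sum>r<Q. \<Prod>i<n. \<Sum>t<3. cf Q (\<beta> i) t * ?E (int t - 1) r)"
    by (simp only: of_real_sum of_real_prod g_expand[OF Q])
  also have "\<dots> = (\<Sum>r<Q. \<Sum>\<tau>\<in>?T. \<Prod>i<n. cf Q (\<beta> i) (\<tau> i) * ?E (int (\<tau> i) - 1) r)"
    by (rule sum.cong[OF refl], rule prod_sum_PiE) auto
  also have "\<dots> = (\<Sum>r<Q. \<Sum>\<tau>\<in>?T. (\<Prod>i<n. cf Q (\<beta> i) (\<tau> i)) * ?E (?K \<tau>) r)"
    by (simp only: prodE)
  also have "\<dots> = (\<Sum>\<tau>\<in>?T. \<Sum>r<Q. (\<Prod>i<n. cf Q (\<beta> i) (\<tau> i)) * ?E (?K \<tau>) r)"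
    by (rule sum.swap)
  also have "\<dots> = (\<Sum>\<tau>\<in>?T. (\<Prod>i<n. cf Q (\<beta> i) (\<tau> i)) * (\<Sum>r<Q. ?E (?K \<tau>) r))"
    by (simp only: sum_distrib_left)
  also have "\<dots> = (\<Sum>\<tau>\<in>?T. (\<Prod>i<n. cf Q (\<beta> i) (\<tau> i)) * (if ?K \<tau> = 0 then of_nat Q else 0))"
    by (rule sum.cong[OF refl], rule arg_cong[where f="times _"], rule root_sum[OF Q Kb])
  finally show ?thesis .
qed

lemma key:
  fixes \<beta> :: "nat \<Rightarrow> real"
  assumes Q: "Q > 0" and n: "n < Q"
  shows "(\<Sum>r<Q. \<Prod>i<n. gQ Q ((\<theta> + 2*pi*real r)/real Q + \<beta> i))
       = (\<Sum>r<Q. \<Prod>i<n. gQ Q ((\<theta>' + 2*pi*real r)/real Q + \<beta> i))"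
proof -
  have "complex_of_real (\<Sum>r<Q. \<Prod>i<n. gQ Q ((\<theta> + 2*pi*real r)/real Q + \<beta> i))
       = complex_of_real (\<Sum>r<Q. \<Prod>i<n. gQ Q ((\<theta>' + 2*pi*real r)/real Q + \<beta> i))"
    by (simp only: key_complex[OF Q n])
  then show ?thesis by (simp only: of_real_eq_iff)
qed



definition pf :: "nat \<Rightarrow> real \<Rightarrow> nat \<Rightarrow> real" where
  "pf Q \<theta> q = (if q < Q then gQ Q ((\<theta> + 2*pi*real q)/real Q) else 0)"

lemma gQ_pos: "Q > 0 \<Longrightarrow> gQ Q x > 0"
proof -
  assume "Q > 0"
  moreover have "0 < 2 + cos x" using cos_ge_minus_one[of x] by linarith
  ultimately show ?thesis unfolding gQ_def by simp
qed

lemma pf_nonneg: "Q > 0 \<Longrightarrow> pf Q \<theta> q \<ge> 0"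
  unfolding pf_def using gQ_pos[of Q] by (auto intro: less_imp_le)

lemma cos_sum_zero:
  assumes "Q \<ge> 2"
  shows "(\<Sum>q<Q. cos ((\<theta> + 2*pi*real q)/real Q)) = 0"
proof -
  have Q: "Q > 0" using assms by simp
  have r1: "(\<Sum>r<Q. exp (\<i> * (of_int 1 * complex_of_real ((\<theta> + 2*pi*real r)/real Q)))) = 0"
    using root_sum[OF Q, of 1 \<theta>] assms by simp
  have r2: "(\<Sum>r<Q. exp (\<i> * (of_int (-1) * complex_of_real ((\<theta> + 2*pi*real r)/real Q)))) = 0"
    using root_sum[OF Q, of "-1" \<theta>] assms by simp
  have c: "complex_of_real (cos x) = (exp (\<i> * (of_int 1 * complex_of_real x)) + exp (\<i> * (of_int (-1) * complex_of_real x))) / 2" for x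
    by (simp add: cos_of_real [symmetric] cos_exp_eq)
  have "complex_of_real (\<Sum>q<Q. cos ((\<theta> + 2*pi*real q)/real Q)) =
     ((\<Sum>r<Q. exp (\<i> * (of_int 1 * complex_of_real ((\<theta> + 2*pi*real r)/real Q)))) +
      (\<Sum>r<Q. exp (\<i> * (of_int (-1) * complex_of_real ((\<theta> + 2*pi*real r)/real Q))))) / 2"
    by (simp only: of_real_sum c add_divide_distrib sum.distrib sum_divide_distrib)
  also have "\<dots> = 0" by (simp only: r1 r2) simp
  finally show ?thesis by (simp only: of_real_eq_0_iff)
qed

lemma pf_sum: "Q \<ge> 2 \<Longrightarrow> (\<Sum>q<Q. pf Q \<theta> q) = 1"
proof -
  assume Q: "Q \<ge> 2"
  have "(\<Sum>q<Q. pf Q \<theta> q) = (\<Sum>q<Q. (2 + cos ((\<theta> + 2*pi*real q)/real Q)) / (2 * real Q))"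
    by (simp add: pf_def gQ_def)
  also have "\<dots> = (2 * real Q + (\<Sum>q<Q. cos ((\<theta> + 2*pi*real q)/real Q))) / (2 * real Q)"
    by (simp add: sum_divide_distrib [symmetric] sum.distrib)
  also have "\<dots> = 1" using Q by (simp add: cos_sum_zero)
  finally show ?thesis .
qed

definition P :: "nat \<Rightarrow> real \<Rightarrow> nat pmf" where "P Q \<theta> = embed_pmf (pf Q \<theta>)"

lemma pf_int: "Q \<ge> 2 \<Longrightarrow> (\<integral>\<^sup>+x. ennreal (pf Q \<theta> x) \<partial>count_space UNIV) = 1"
proof -
  assume Q: "Q \<ge> 2"
  have "(\<integral>\<^sup>+x. ennreal (pf Q \<theta> x) \<partial>count_space UNIV) = (\<Sum>x<Q. ennreal (pf Q \<theta> x))"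
    by (rule nn_integral_count_space') (auto simp: pf_def)
  also have "\<dots> = ennreal (\<Sum>x<Q. pf Q \<theta> x)"
    using Q by (intro sum_ennreal pf_nonneg) auto
  also have "\<dots> = 1" using pf_sum[OF Q] by simp
  finally show ?thesis .
qed

lemma pmf_P: assumes Q: "Q \<ge> 2" shows "pmf (P Q \<theta>) q = pf Q \<theta> q"
proof -
  have Q0: "Q > 0" using Q by simp
  show ?thesis unfolding P_def by (rule pmf_embed_pmf[OF pf_nonneg[OF Q0] pf_int[OF Q]])
qed

lemma set_P: assumes Q: "Q \<ge> 2" shows "set_pmf (P Q \<theta>) \<subseteq> {..<Q}"
proof -
  have Q0: "Q > 0" using Q by simp
  show ?thesis unfolding P_def set_embed_pmf[OF pf_nonneg[OF Q0] pf_int[OF Q]] by (auto simp: pf_def)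
qed

lemma open_P: "Q \<ge> 2 \<Longrightarrow> open_simplex Q (P Q \<theta>)"
  unfolding open_simplex_def using set_P[of Q \<theta>] by (auto simp: pmf_P pf_def intro: gQ_pos)

lemma cos_shift_nat: "cos (x - 2 * pi * real m) = cos x"
proof -
  have "cos (x - 2 * pi * real m) = cos x * cos ((2 * pi) * of_int (int m)) + sin x * sin ((2 * pi) * of_int (int m))"
    by (simp add: cos_diff)
  then show ?thesis using cos_int_2pin[of "int m"] sin_int_2pin[of "int m"] by simp
qed

lemma pf_shift:
  assumes "Q > 0" "a < Q"
  shows "pf Q \<theta> ((a + r) mod Q) = gQ Q ((\<theta> + 2*pi*real r)/real Q + 2*pi*real a/real Q)"
proof -
  define m where "m = (a + r) div Q"
  have "a + r = m * Q + (a + r) mod Q" unfolding m_def by simp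
  then have "real (a + r) = real (m * Q + (a + r) mod Q)" by (rule arg_cong)
  then have "real a + real r = real m * real Q + real ((a + r) mod Q)" by simp
  then have e: "real ((a + r) mod Q) = real a + real r - real m * real Q" by linarith
  have "(\<theta> + 2*pi*real ((a + r) mod Q))/real Q = ((\<theta> + 2*pi*real r)/real Q + 2*pi*real a/real Q) - 2 * pi * real m"
    unfolding e using assms by (simp add: field_simps)
  then show ?thesis using assms by (simp add: pf_def gQ_def cos_shift_nat)
qed

lemma not_swap:
  assumes Q: "Q \<ge> 2"
  shows "\<not> label_swap Q (P Q 0) (P Q pi)"
proof
  assume "label_swap Q (P Q 0) (P Q pi)"
  then obtain \<sigma> where \<sigma>: "\<sigma> permutes {..<Q}" and eq: "\<And>q. pmf (P Q pi) q = pmf (P Q 0) (\<sigma> q)"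
    unfolding label_swap_def by blast
  obtain q where q: "\<sigma> q = 0" using \<sigma> unfolding permutes_def by metis
  have qQ: "q < Q"
  proof (rule ccontr)
    assume "\<not> q < Q" then have "\<sigma> q = q" using \<sigma> by (auto simp: permutes_def)
    with q Q \<open>\<not> q < Q\<close> show False by simp
  qed
  have "pf Q pi q = pf Q 0 0" using eq[of q] q Q by (simp add: pmf_P)
  then have "cos ((pi + 2*pi*real q)/real Q) = 1" using qQ Q by (simp add: pf_def gQ_def)
  then obtain m :: int where m: "(pi + 2*pi*real q)/real Q = of_int m * 2 * pi"
    by (auto simp: cos_one_2pi_int)
  then have "pi * (1 + 2 * real q) = pi * (2 * of_int m * real Q)" using Q by (simp add: field_simps)
  then have "1 + 2 * real q = 2 * of_int m * real Q" by simp
  then have "real_of_int (1 + 2 * int q) = real_of_int (2 * m * int Q)" by simp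
  then have "1 + 2 * int q = 2 * m * int Q" by (simp only: of_int_eq_iff)
  then have "even (1 + 2 * int q)" by simp
  then show False by simp
qed



lemma mod_inv: "(a::nat) < Q \<Longrightarrow> r \<le> Q \<Longrightarrow> ((a + r) mod Q + (Q - r)) mod Q = a"
proof -
  assume a: "a < Q" and r: "r \<le> Q"
  have "((a + r) mod Q + (Q - r)) mod Q = (a + r + (Q - r)) mod Q" by (rule mod_add_left_eq)
  also have "a + r + (Q - r) = a + Q" using r by simp
  finally show ?thesis using a by simp
qed

lemma law_eq:
  fixes mu_in mu_out :: "'a measure"
  assumes Q: "Q \<ge> 2" and n: "n < Q"
    and pin: "prob_space mu_in" and pout: "prob_space mu_out"
    and sets_eq: "sets mu_in = sets mu_out"
  shows "affiliation_law n (P Q \<theta>) mu_in mu_out = affiliation_law n (P Q \<theta>') mu_in mu_out"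
proof -
  have Q0: "Q > 0" using Q by simp
  define S where "S = PiE_dflt {..<n} (0::nat) (\<lambda>_. {..<Q})"
  define sh where "sh r z = (\<lambda>i. if i < n then (z i + r) mod Q else (0::nat))" for r :: nat and z :: "nat \<Rightarrow> nat"
  define K where "K z = PiM (edges n) (\<lambda>e. if z (fst e) = z (snd e) then mu_in else mu_out)" for z :: "nat \<Rightarrow> nat"
  define N where "N = PiM (edges n) (\<lambda>_. mu_in)"
  define w where "w t z = (\<Prod>i<n. pf Q t (z i))" for t z
  have finS: "finite S" unfolding S_def by auto
  have F1: "sets (K z) = sets N" for z
    unfolding K_def N_def by (rule sets_PiM_cong) (auto simp: sets_eq)
  have F2: "prob_space (K z)" for z
    unfolding K_def by (rule prob_space_PiM) (auto simp: pin pout)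
  have F3: "K \<in> measurable (measure_pmf X) (subprob_algebra N)" for X :: "(nat \<Rightarrow> nat) pmf"
    using F1 F2 by (auto simp: space_subprob_algebra intro: prob_space_imp_subprob_space)
  have wS: "pmf (Pi_pmf {..<n} 0 (\<lambda>_. P Q t)) z = w t z" if "z \<in> S" for t z
    using that Q by (subst pmf_Pi') (auto simp: S_def PiE_dflt_def w_def pmf_P)
  have supp: "set_pmf (Pi_pmf {..<n} 0 (\<lambda>_. P Q t)) \<subseteq> S" for t
  proof -
    have "set_pmf (Pi_pmf {..<n} 0 (\<lambda>_. P Q t)) \<subseteq> PiE_dflt {..<n} 0 (set_pmf \<circ> (\<lambda>_. P Q t))"
      by (rule set_Pi_pmf_subset') simp
    also have "\<dots> \<subseteq> S" using set_P[OF Q, of t] unfolding S_def PiE_dflt_def by auto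
    finally show ?thesis .
  qed
  have F4: "emeasure (affiliation_law n (P Q t) mu_in mu_out) A = (\<Sum>z\<in>S. emeasure (K z) A * ennreal (w t z))"
    if A: "A \<in> sets N" for t A
  proof -
    have "emeasure (affiliation_law n (P Q t) mu_in mu_out) A
        = (\<integral>\<^sup>+z. emeasure (K z) A \<partial>measure_pmf (Pi_pmf {..<n} 0 (\<lambda>_. P Q t)))"
      unfolding affiliation_law_def K_def[symmetric]
      by (rule emeasure_bind[OF _ F3 A]) simp
    also have "\<dots> = (\<Sum>z\<in>S. emeasure (K z) A * ennreal (pmf (Pi_pmf {..<n} 0 (\<lambda>_. P Q t)) z))"
      by (rule nn_integral_measure_pmf_support[OF finS]) (use supp in auto)
    also have "\<dots> = (\<Sum>z\<in>S. emeasure (K z) A * ennreal (w t z))"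
      by (rule sum.cong) (auto simp: wS)
    finally show ?thesis .
  qed
  have shS: "sh r z \<in> S" if "z \<in> S" for r z
    using Q0 unfolding S_def PiE_dflt_def sh_def by auto
  have F5: "bij_betw (sh r) S S" if r: "r < Q" for r
  proof (rule bij_betw_byWitness[where f'="sh (Q - r)"])
    show "\<forall>a\<in>S. sh (Q - r) (sh r a) = a"
    proof
      fix a assume "a \<in> S"
      then have "\<forall>i. (i < n \<longrightarrow> a i < Q) \<and> (\<not> i < n \<longrightarrow> a i = 0)" by (auto simp: S_def PiE_dflt_def)
      moreover have "((x + r) mod Q + Q - r) mod Q = x" if "x < Q" for x
        using mod_inv[OF that, of r] r by simp
      ultimately show "sh (Q - r) (sh r a) = a" using r by (auto simp: sh_def fun_eq_iff)
    qed
    show "\<forall>a\<in>S. sh r (sh (Q - r) a) = a"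
    proof
      fix a assume "a \<in> S"
      then have "\<forall>i. (i < n \<longrightarrow> a i < Q) \<and> (\<not> i < n \<longrightarrow> a i = 0)" by (auto simp: S_def PiE_dflt_def)
      moreover have "((x + (Q - r)) mod Q + (Q - (Q - r))) mod Q = x" if "x < Q" for x
        using mod_inv[OF that, of "Q - r"] by simp
      ultimately show "sh r (sh (Q - r) a) = a" using r by (auto simp: sh_def fun_eq_iff)
    qed
  qed (use shS in auto)
  have F6: "K (sh r z) = K z" if z: "z \<in> S" and r: "r < Q" for r z
    unfolding K_def
  proof (rule PiM_cong[OF refl])
    fix e assume "e \<in> edges n"
    then have e: "fst e < n" "snd e < n" by (auto simp: edges_def)
    have zl: "z (fst e) < Q" "z (snd e) < Q" using z e by (auto simp: S_def PiE_dflt_def)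
    have "(z (fst e) + r) mod Q = (z (snd e) + r) mod Q \<longleftrightarrow> z (fst e) = z (snd e)"
    proof
      assume h: "(z (fst e) + r) mod Q = (z (snd e) + r) mod Q"
      have "z (fst e) = ((z (fst e) + r) mod Q + (Q - r)) mod Q" using mod_inv[OF zl(1), of r] r by simp
      also have "\<dots> = ((z (snd e) + r) mod Q + (Q - r)) mod Q" by (simp only: h)
      also have "\<dots> = z (snd e)" using mod_inv[OF zl(2), of r] r by simp
      finally show "z (fst e) = z (snd e)" .
    qed simp
    then show "(if sh r z (fst e) = sh r z (snd e) then mu_in else mu_out) =
               (if z (fst e) = z (snd e) then mu_in else mu_out)"
      using e by (simp add: sh_def)
  qed
  have F8: "(\<Sum>r<Q. w t (sh r z)) = (\<Sum>r<Q. w t' (sh r z))" if z: "z \<in> S" for t t' z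
  proof -
    have F7: "w s (sh r z) = (\<Prod>i<n. gQ Q ((s + 2*pi*real r)/real Q + 2*pi*real (z i)/real Q))" for s r
      unfolding w_def
    proof (rule prod.cong[OF refl])
      fix i assume "i \<in> {..<n}"
      then have "z i < Q" "i < n" using z by (auto simp: S_def PiE_dflt_def)
      then show "pf Q s (sh r z i) = gQ Q ((s + 2*pi*real r)/real Q + 2*pi*real (z i)/real Q)"
        using pf_shift[OF Q0] by (simp add: sh_def)
    qed
    show ?thesis unfolding F7 by (rule key[OF Q0 n])
  qed
  have wnn: "w t z \<ge> 0" for t z unfolding w_def using pf_nonneg[OF Q0] by (intro prod_nonneg) auto
  define f where "f A z = emeasure (K z) A" for A z
  have X: "of_nat Q * (\<Sum>z\<in>S. f A z * ennreal (w t z)) = (\<Sum>z\<in>S. f A z * ennreal (\<Sum>r<Q. w t (sh r z)))"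
    for t A
  proof -
    have "of_nat Q * (\<Sum>z\<in>S. f A z * ennreal (w t z)) = (\<Sum>r<Q. (\<Sum>z\<in>S. f A z * ennreal (w t z)))"
      by simp
    also have "\<dots> = (\<Sum>r<Q. (\<Sum>z\<in>S. f A (sh r z) * ennreal (w t (sh r z))))"
      by (rule sum.cong[OF refl], rule sum.reindex_bij_betw[symmetric], rule F5) simp
    also have "\<dots> = (\<Sum>r<Q. (\<Sum>z\<in>S. f A z * ennreal (w t (sh r z))))"
      by (intro sum.cong refl) (simp add: f_def F6)
    also have "\<dots> = (\<Sum>z\<in>S. \<Sum>r<Q. f A z * ennreal (w t (sh r z)))"
      by (rule sum.swap)
    also have "\<dots> = (\<Sum>z\<in>S. f A z * ennreal (\<Sum>r<Q. w t (sh r z)))"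
    proof (rule sum.cong[OF refl])
      fix z
      have "ennreal (\<Sum>r<Q. w t (sh r z)) = (\<Sum>r<Q. ennreal (w t (sh r z)))"
        by (rule sum_ennreal[symmetric]) (rule wnn)
      then show "(\<Sum>r<Q. f A z * ennreal (w t (sh r z))) = f A z * ennreal (\<Sum>r<Q. w t (sh r z))"
        by (simp only: sum_distrib_left)
    qed
    finally show ?thesis .
  qed
  show ?thesis
  proof (rule measure_eqI)
    show "sets (affiliation_law n (P Q \<theta>) mu_in mu_out) = sets (affiliation_law n (P Q \<theta>') mu_in mu_out)"
      unfolding affiliation_law_def K_def[symmetric] using F1 by simp
    fix A assume "A \<in> sets (affiliation_law n (P Q \<theta>) mu_in mu_out)"
    then have A: "A \<in> sets N" unfolding affiliation_law_def K_def[symmetric] using F1 by simp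
    have "of_nat Q * emeasure (affiliation_law n (P Q \<theta>) mu_in mu_out) A
        = of_nat Q * emeasure (affiliation_law n (P Q \<theta>') mu_in mu_out) A"
      unfolding F4[OF A] f_def[symmetric] X by (rule sum.cong[OF refl]) (metis F8)
    then show "emeasure (affiliation_law n (P Q \<theta>) mu_in mu_out) A = emeasure (affiliation_law n (P Q \<theta>') mu_in mu_out) A"
      using Q0 by (simp add: ennreal_mult_cancel_left)
  qed
qed

theorem proposition3:
  fixes Q n :: nat and mu_in mu_out :: "'a measure"
  assumes "Q \<ge> 2" and "n < Q"
    and "prob_space mu_in" and "prob_space mu_out"
    and "sets mu_in = sets mu_out"
  shows "\<exists>p p'. open_simplex Q p \<and> open_simplex Q p' \<and> \<not> label_swap Q p p' \<and>
           affiliation_law n p mu_in mu_out = affiliation_law n p' mu_in mu_out"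
  using open_P[OF assms(1), of 0] open_P[OF assms(1), of pi] not_swap[OF assms(1)]
    law_eq[OF assms, of 0 pi] by blast

end
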